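(* Let $M$ be a free $\mathbb{T}$-module with a finite $\mathbb{T}$-basis, $V$ its associated complex vector space, and $(\cdot,\cdot)$ a bicomplex scalar product on $M$ which is hyperbolic positive and closed on $V$. Then for every $\widehat X\in M$ and $k=1,2$, $$P_k\big((\widehat X,\widehat X)\big)=(\widehat X_{\mathbf{e_k}},\widehat X_{\mathbf{e_k}})=\|\widehat X_{\mathbf{e_k}}\|^2 .$$
   Context: Bicomplex numbers: $\mathbb{T}=\{z_1+z_2\mathbf{i_2}: z_1,z_2\in\mathbb{C}(\mathbf{i_1})\}$, $\mathbb{C}(\mathbf{i_1})=\{x+y\mathbf{i_1}: x,y\in\mathbb{R}\}$, $\mathbf{i_1}^2=\mathbf{i_2}^2=-1$, $\mathbf{i_1}\mathbf{i_2}=\mathbf{i_2}\mathbf{i_1}=\mathbf{j}$, $\mathbf{j}^2=1$ (commutative). Hyperbolic numbers $\mathbb{D}=\{x+y\mathbf{j}:x,y\in\mathbb{R}\}$. Idempotents $\mathbf{e_1}=(1+\mathbf{j})/2$, $\mathbf{e_2}=(1-\mathbf{j})/2$. Every $w=z_1+z_2\mathbf{i_2}$ is uniquely $w=(z_1-z_2\mathbf{i_1})\mathbf{e_1}+(z_1+z_2\mathbf{i_1})\mathbf{e_2}$; set $P_1(w)=z_1-z_2\mathbf{i_1}$, $P_2(w)=z_1+z_2\mathbf{i_1}$. Conjugation: $(z_1+z_2\mathbf{i_2})^{\dagger_3}=\overline{z_1}-\overline{z_2}\mathbf{i_2}$. $\mathbb{D}^+=\{a\mathbf{e_1}+b\mathbf{e_2}: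 a,b\ge 0\}$. $M$ has $\mathbb{T}$-basis $\{\widehat m_1,\dots,\widehat m_n\}$, $V=\{\sum x_l\widehat m_l: x_l\in\mathbb{C}(\mathbf{i_1})\}$; for $\widehat X=\sum x_l\widehat m_l$ with $x_l=x_{1l}\mathbf{e_1}+x_{2l}\mathbf{e_2}$, $x_{kl}\in\mathbb{C}(\mathbf{i_1})$, put $\widehat X_{\mathbf{e_k}}=\sum_l x_{kl}\widehat m_l\in V$. A bicomplex scalar product is a map $(\cdot,\cdot):M\times M\to\mathbb{T}$ with: $(\widehat X,\widehat Y_1+\widehat Y_2)=(\widehat X,\widehat Y_1)+(\widehat X,\widehat Y_2)$; $(\widehat X,\alpha\widehat Y)=\alpha(\widehat X,\widehat Y)$ for $\alpha\in\mathbb{T}$; $(\widehat X,\widehat Y)=(\widehat Y,\widehat X)^{\dagger_3}$; $(\widehat X,\widehat X)=0\iff\widehat X=0$. Hyperbolic positive: $(\widehat X,\widehat X)\in\mathbb{D}^+$ for all $\widehat X$. Closed on $V$: $(\widehat X,\widehat Y)\in\mathbb{C}(\mathbf{i_1})$ for $\widehat X,\widehat Y\in V$. For $\widehat Z\in V$, $\|\widehat Z\|=(\widehat Z,\widehat Z)^{1/2}$. *)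

theory Defs
  imports Complex_Main
begin

text \<open>Bicomplex numbers z1 + z2 i2 with z1, z2 in C(i1); C(i1) is the type complex
  (i1 = the complex unit).\<close>
datatype bicomplex = BC (bc1: complex) (bc2: complex)

definition bc_add :: "bicomplex \<Rightarrow> bicomplex \<Rightarrow> bicomplex" where
  "bc_add w v = BC (bc1 w + bc1 v) (bc2 w + bc2 v)"

definition bc_mul :: "bicomplex \<Rightarrow> bicomplex \<Rightarrow> bicomplex" where
  "bc_mul w v = BC (bc1 w * bc1 v - bc2 w * bc2 v) (bc1 w * bc2 v + bc2 w * bc1 v)"

definition bc_zero :: bicomplex where "bc_zero = BC 0 0"

definition bc_of_complex :: "complex \<Rightarrow> bicomplex" where "bc_of_complex z = BC z 0"

text \<open>j = i1 i2, idempotents e1 = (1+j)/2, e2 = (1-j)/2.\<close>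
definition bc_j :: bicomplex where "bc_j = BC 0 \<i>"
definition bc_e1 :: bicomplex where "bc_e1 = BC (1/2) (\<i>/2)"
definition bc_e2 :: bicomplex where "bc_e2 = BC (1/2) (-\<i>/2)"

definition bc_P :: "nat \<Rightarrow> bicomplex \<Rightarrow> complex" where
  "bc_P k w = (if k = 1 then bc1 w - bc2 w * \<i> else bc1 w + bc2 w * \<i>)"

definition bc_dag3 :: "bicomplex \<Rightarrow> bicomplex" where
  "bc_dag3 w = BC (cnj (bc1 w)) (- cnj (bc2 w))"

definition bc_Dplus :: "bicomplex set" where
  "bc_Dplus = {w. \<exists>a b :: real. a \<ge> 0 \<and> b \<ge> 0 \<and>
      w = bc_add (bc_mul (bc_of_complex (complex_of_real a)) bc_e1)
                 (bc_mul (bc_of_complex (complex_of_real b)) bc_e2)}"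

definition bc_hsqrt :: "bicomplex \<Rightarrow> bicomplex" where
  "bc_hsqrt w = bc_add (bc_mul (bc_of_complex (complex_of_real (sqrt (Re (bc_P 1 w))))) bc_e1)
                       (bc_mul (bc_of_complex (complex_of_real (sqrt (Re (bc_P 2 w))))) bc_e2)"

text \<open>The free T-module M with finite basis indexed by the finite type 'n:
  an element is its coordinate vector (x_l)_l.  Module operations.\<close>
definition mod_add :: "('n \<Rightarrow> bicomplex) \<Rightarrow> ('n \<Rightarrow> bicomplex) \<Rightarrow> ('n \<Rightarrow> bicomplex)" where
  "mod_add X Y = (\<lambda>l. bc_add (X l) (Y l))"

definition mod_smult :: "bicomplex \<Rightarrow> ('n \<Rightarrow> bicomplex) \<Rightarrow> ('n \<Rightarrow> bicomplex)" where
  "mod_smult \<alpha> X = (\<lambda>l. bc_mul \<alpha> (X l))"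

definition mod_zero :: "'n \<Rightarrow> bicomplex" where "mod_zero = (\<lambda>l. bc_zero)"

text \<open>The associated C(i1)-vector space V (coordinates in C(i1)).\<close>
definition mod_V :: "('n \<Rightarrow> bicomplex) set" where
  "mod_V = {X. \<forall>l. bc2 (X l) = 0}"

text \<open>X_{e_k} = sum_l x_{kl} m_l, where x_l = x_{1l} e1 + x_{2l} e2.\<close>
definition mod_comp :: "nat \<Rightarrow> ('n \<Rightarrow> bicomplex) \<Rightarrow> ('n \<Rightarrow> bicomplex)" where
  "mod_comp k X = (\<lambda>l. bc_of_complex (bc_P k (X l)))"

definition bc_scalar_product :: "(('n \<Rightarrow> bicomplex) \<Rightarrow> ('n \<Rightarrow> bicomplex) \<Rightarrow> bicomplex) \<Rightarrow> bool" where
  "bc_scalar_product sp \<longleftrightarrow>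
     (\<forall>X Y1 Y2. sp X (mod_add Y1 Y2) = bc_add (sp X Y1) (sp X Y2)) \<and>
     (\<forall>X Y \<alpha>. sp X (mod_smult \<alpha> Y) = bc_mul \<alpha> (sp X Y)) \<and>
     (\<forall>X Y. sp X Y = bc_dag3 (sp Y X)) \<and>
     (\<forall>X. sp X X = bc_zero \<longleftrightarrow> X = mod_zero)"

definition hyperbolic_positive :: "(('n \<Rightarrow> bicomplex) \<Rightarrow> ('n \<Rightarrow> bicomplex) \<Rightarrow> bicomplex) \<Rightarrow> bool" where
  "hyperbolic_positive sp \<longleftrightarrow> (\<forall>X. sp X X \<in> bc_Dplus)"

definition closed_on_V :: "(('n \<Rightarrow> bicomplex) \<Rightarrow> ('n \<Rightarrow> bicomplex) \<Rightarrow> bicomplex) \<Rightarrow> bool" where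
  "closed_on_V sp \<longleftrightarrow> (\<forall>X\<in>mod_V. \<forall>Y\<in>mod_V. bc2 (sp X Y) = 0)"

definition bc_normV :: "(('n \<Rightarrow> bicomplex) \<Rightarrow> ('n \<Rightarrow> bicomplex) \<Rightarrow> bicomplex) \<Rightarrow> ('n \<Rightarrow> bicomplex) \<Rightarrow> bicomplex" where
  "bc_normV sp Z = bc_hsqrt (sp Z Z)"

end

theory Submission
  imports Defs
begin

lemma dag3_dag3[simp]: "bc_dag3 (bc_dag3 w) = w"
  by (cases w) (simp add: bc_dag3_def)

lemma dag3_add: "bc_dag3 (bc_add a b) = bc_add (bc_dag3 a) (bc_dag3 b)"
  by (simp add: bc_dag3_def bc_add_def)

lemma dag3_mul: "bc_dag3 (bc_mul a b) = bc_mul (bc_dag3 a) (bc_dag3 b)"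
  by (simp add: bc_dag3_def bc_mul_def)

lemma sp_add_left:
  assumes "bc_scalar_product sp"
  shows "sp (mod_add Y1 Y2) Z = bc_add (sp Y1 Z) (sp Y2 Z)"
proof -
  have c: "\<And>X Y. sp X Y = bc_dag3 (sp Y X)" using assms unfolding bc_scalar_product_def by blast
  have a: "\<And>X Y1 Y2. sp X (mod_add Y1 Y2) = bc_add (sp X Y1) (sp X Y2)"
    using assms unfolding bc_scalar_product_def by blast
  show ?thesis by (subst c) (simp add: a dag3_add c[symmetric])
qed

lemma sp_smult_left:
  assumes "bc_scalar_product sp"
  shows "sp (mod_smult \<alpha> Y) Z = bc_mul (bc_dag3 \<alpha>) (sp Y Z)"
proof -
  have c: "\<And>X Y. sp X Y = bc_dag3 (sp Y X)" using assms unfolding bc_scalar_product_def by blast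
  have a: "\<And>X Y \<alpha>. sp X (mod_smult \<alpha> Y) = bc_mul \<alpha> (sp X Y)"
    using assms unfolding bc_scalar_product_def by blast
  show ?thesis by (subst c) (simp add: a dag3_mul c[symmetric])
qed

lemma decomp: "X = mod_add (mod_smult bc_e1 (mod_comp 1 X)) (mod_smult bc_e2 (mod_comp 2 X))"
  apply (rule ext)
  apply (simp add: mod_add_def mod_smult_def mod_comp_def bc_e1_def bc_e2_def bc_mul_def
      bc_add_def bc_of_complex_def bc_P_def)
  apply (rule bicomplex.expand)
  apply (simp add: complex_eq_iff field_simps)
  done

lemma comp_V: "mod_comp k X \<in> mod_V"
  by (simp add: mod_comp_def mod_V_def bc_of_complex_def)

theorem mainTheorem9:
  fixes sp :: "('n::finite \<Rightarrow> bicomplex) \<Rightarrow> ('n \<Rightarrow> bicomplex) \<Rightarrow> bicomplex"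
    and X :: "'n \<Rightarrow> bicomplex"
    and k :: nat
  assumes "bc_scalar_product sp"
    and "hyperbolic_positive sp"
    and "closed_on_V sp"
    and "k = 1 \<or> k = 2"
  shows "bc_of_complex (bc_P k (sp X X)) = sp (mod_comp k X) (mod_comp k X)
       \<and> sp (mod_comp k X) (mod_comp k X)
           = bc_mul (bc_normV sp (mod_comp k X)) (bc_normV sp (mod_comp k X))"
proof -
  have a: "\<And>X Y1 Y2. sp X (mod_add Y1 Y2) = bc_add (sp X Y1) (sp X Y2)"
    and m: "\<And>X Y \<alpha>. sp X (mod_smult \<alpha> Y) = bc_mul \<alpha> (sp X Y)"
    using assms(1) unfolding bc_scalar_product_def by blast+
  define X1 where "X1 = mod_comp 1 X"
  define X2 where "X2 = mod_comp 2 X"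
  have V: "\<And>Y Z. Y \<in> {X1, X2} \<Longrightarrow> Z \<in> {X1, X2} \<Longrightarrow> sp Y Z = BC (bc1 (sp Y Z)) 0"
  proof -
    fix Y Z assume "Y \<in> {X1, X2}" "Z \<in> {X1, X2}"
    hence "bc2 (sp Y Z) = 0" using assms(3) comp_V unfolding closed_on_V_def X1_def X2_def by blast
    thus "sp Y Z = BC (bc1 (sp Y Z)) 0" by (metis bicomplex.collapse)
  qed
  have e1: "bc_dag3 bc_e1 = bc_e1" and e2: "bc_dag3 bc_e2 = bc_e2"
    by (simp_all add: bc_dag3_def bc_e1_def bc_e2_def)
  have XX: "sp X X = bc_add (bc_mul bc_e1 (bc_add (bc_mul bc_e1 (sp X1 X1)) (bc_mul bc_e2 (sp X2 X1))))
      (bc_mul bc_e2 (bc_add (bc_mul bc_e1 (sp X1 X2)) (bc_mul bc_e2 (sp X2 X2))))"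
  proof -
    have "sp X X = sp (mod_add (mod_smult bc_e1 X1) (mod_smult bc_e2 X2)) (mod_add (mod_smult bc_e1 X1) (mod_smult bc_e2 X2))"
      unfolding X1_def X2_def using decomp[of X] by simp
    also have "\<dots> = bc_add (bc_mul bc_e1 (bc_add (bc_mul bc_e1 (sp X1 X1)) (bc_mul bc_e2 (sp X2 X1))))
      (bc_mul bc_e2 (bc_add (bc_mul bc_e1 (sp X1 X2)) (bc_mul bc_e2 (sp X2 X2))))"
      by (simp only: a m sp_add_left[OF assms(1)] sp_smult_left[OF assms(1)] e1 e2)
    finally show ?thesis .
  qed
  obtain c11 c12 c21 c22 where V11: "sp X1 X1 = BC c11 0" and V12: "sp X1 X2 = BC c12 0"
    and V21: "sp X2 X1 = BC c21 0" and V22: "sp X2 X2 = BC c22 0"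
    using V by blast
  have P1: "bc_of_complex (bc_P 1 (sp X X)) = sp X1 X1"
    unfolding XX V11 V12 V21 V22
    apply (simp add: bc_of_complex_def bc_P_def bc_add_def bc_mul_def bc_e1_def bc_e2_def complex_eq_iff field_simps)
    done
  have P2: "bc_of_complex (bc_P 2 (sp X X)) = sp X2 X2"
    unfolding XX V11 V12 V21 V22
    apply (simp add: bc_of_complex_def bc_P_def bc_add_def bc_mul_def bc_e1_def bc_e2_def complex_eq_iff field_simps)
    done
  have norm: "sp Z Z = bc_mul (bc_normV sp Z) (bc_normV sp Z)" if "Z \<in> mod_V" for Z
  proof -
    have b2: "bc2 (sp Z Z) = 0" using assms(3) that unfolding closed_on_V_def by blast
    obtain p q :: real where pq: "p \<ge> 0" "q \<ge> 0"
      "sp Z Z = bc_add (bc_mul (bc_of_complex (complex_of_real p)) bc_e1)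
                 (bc_mul (bc_of_complex (complex_of_real q)) bc_e2)"
      using assms(2) unfolding hyperbolic_positive_def bc_Dplus_def by blast
    have "p = q" using b2 unfolding pq(3)
      by (simp add: bc_add_def bc_mul_def bc_of_complex_def bc_e1_def bc_e2_def complex_eq_iff field_simps)
    hence S: "sp Z Z = BC (complex_of_real p) 0" using pq(3)
      by (simp add: bc_add_def bc_mul_def bc_of_complex_def bc_e1_def bc_e2_def complex_eq_iff field_simps)
    have "sqrt p * sqrt p = p" using pq(1) by simp
    thus ?thesis unfolding bc_normV_def bc_hsqrt_def S
      by (simp add: bc_add_def bc_mul_def bc_of_complex_def bc_e1_def bc_e2_def bc_P_def complex_eq_iff
          field_simps)
  qed
  show ?thesis using assms(4) P1 P2 norm comp_V unfolding X1_def X2_def by auto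
qed

end
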